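(* Let $p$ be a prime and $(a,b,c)$ a primitive positive definite form of discriminant $\Delta<0$. Then $$P_{p,0}(a,b,c,q)=\begin{cases}(a,bp,cp^2,q), & p\mid a,\ \left(\frac{\Delta}{p}\right)=0,\\ f_1(q), & p\nmid a,\ \left(\frac{\Delta}{p}\right)=0,\\ (a,b,c,q^{p^2}), & \left(\frac{\Delta}{p}\right)=-1,\\ f_2(q)+(a,pb,cp^2,q)-(a,b,c,q^{p^2}), & p\mid a,\ \left(\frac{\Delta}{p}\right)=1,\\ f_3(q)+f_4(q)-(a,b,c,q^{p^2}), & p\nmid a,\ \left(\frac{\Delta}{p}\right)=1,\end{cases}$$ where $f_i(q):=(ap^2,\,p(b+2ah_i),\,ah_i^2+bh_i+c,\,q)$ and $0\le h_i<p$ are: for $p$ odd, $h_1\equiv -b/(2a)$, $h_2\equiv -c/b$, $h_3\equiv(-b+\sqrt{\Delta})/(2a)$, $h_4\equiv(-b-\sqrt{\Delta})/(2a)\pmod p$ ($\sqrt\Delta$ a fixed square root of $\Delta$ mod $p$); for $p=2$, $h_1\equiv h_2\equiv h_3\equiv c\pmod 2$ and $h_4\not\equiv h_3\pmod 2$.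
   Context: For integers $A,B,C$ with $A>0$, $B^2-4AC<0$, the theta series is the formal power series $(A,B,C,q):=\sum_{(x,y)\in\mathbb Z^2}q^{Ax^2+Bxy+Cy^2}=\sum_{n\ge0}(A,B,C;n)q^n$, where $(A,B,C;n)$ is the number of representations of $n$ by $Ax^2+Bxy+Cy^2$; $(A,B,C,q^{k})$ denotes this series with $q$ replaced by $q^k$. For $m\ge1$ and $0\le r<m$, the projection operator is $P_{m,r}\sum_{n\ge0}a(n)q^n=\sum_{n\ge0}a(mn+r)q^{mn+r}$. $\left(\frac{\Delta}{p}\right)$ is the Kronecker symbol. *)

theory Defs
  imports "HOL-Number_Theory.Number_Theory" "HOL-Computational_Algebra.Formal_Power_Series"
begin

definition reps :: "int \<Rightarrow> int \<Rightarrow> int \<Rightarrow> nat \<Rightarrow> nat" where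
  "reps A B C n = card {(x :: int, y :: int). A * x^2 + B * x * y + C * y^2 = int n}"

text \<open>theta A B C k is the theta series (A,B,C,q^k), i.e. the series
  sum over (x,y) of q^(k (A x^2 + B x y + C y^2)), as a formal power series.\<close>
definition theta :: "int \<Rightarrow> int \<Rightarrow> int \<Rightarrow> nat \<Rightarrow> int fps" where
  "theta A B C k = Abs_fps (\<lambda>n. if k dvd n then int (reps A B C (n div k)) else 0)"

definition proj :: "nat \<Rightarrow> nat \<Rightarrow> int fps \<Rightarrow> int fps" where
  "proj m r f = Abs_fps (\<lambda>n. if n mod m = r then fps_nth f n else 0)"

definition kronecker_prime :: "int \<Rightarrow> nat \<Rightarrow> int" where
  "kronecker_prime D p =
     (if p = 2 then (if even D then 0 else if D mod 8 = 1 \<or> D mod 8 = 7 then 1 else -1)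
      else Legendre D (int p))"

end

theory Submission imports Defs begin

definition qf :: "int \<Rightarrow> int \<Rightarrow> int \<Rightarrow> int \<Rightarrow> int \<Rightarrow> int" where
  "qf a b c x y = a*x^2 + b*x*y + c*y^2"

lemma theta1_nth: "fps_nth (theta A B C 1) n = int (card {(x,y). qf A B C x y = int n})"
  by (simp add: theta_def reps_def qf_def)

lemma proj0_nth:
  assumes "p > 0"
  shows "fps_nth (proj p 0 (theta a b c 1)) n = int (card {(x,y). qf a b c x y = int n \<and> int p dvd qf a b c x y})"
proof (cases "p dvd n")
  case True
  then have "int p dvd int n" by simp
  then have "{(x,y). qf a b c x y = int n \<and> int p dvd qf a b c x y} = {(x,y). qf a b c x y = int n}"
    by auto
  then show ?thesis using True by (simp add: proj_def theta_def reps_def qf_def)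
next
  case False
  then have "\<not> int p dvd int n" by simp
  then have E: "{(x,y). qf a b c x y = int n \<and> int p dvd qf a b c x y} = {}"
    by auto
  show ?thesis unfolding E using False by (simp add: proj_def dvd_eq_mod_eq_0)
qed

lemma line_nth:
  assumes "p > 0"
  shows "fps_nth (theta (a * int p^2) (int p * (b + 2*a*h)) (a*h^2 + b*h + c) 1) n
     = int (card {(x,y). qf a b c x y = int n \<and> int p dvd (x - h*y)})"
proof -
  define g where "g = (\<lambda>(z::int,y::int). (h*y + int p * z, y))"
  have id: "qf (a * int p^2) (int p * (b + 2*a*h)) (a*h^2 + b*h + c) z y = qf a b c (h*y + int p * z) y" for z y
    by (simp add: qf_def power2_eq_square algebra_simps)
  have inj: "inj g" unfolding g_def inj_def using assms by auto
  have "{(x,y). qf a b c x y = int n \<and> int p dvd (x - h*y)}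
      = g ` {(z,y). qf (a * int p^2) (int p * (b + 2*a*h)) (a*h^2 + b*h + c) z y = int n}"
  proof (intro equalityI subsetI)
    fix xy assume "xy \<in> {(x,y). qf a b c x y = int n \<and> int p dvd (x - h*y)}"
    then obtain x y where xy: "xy = (x,y)" "qf a b c x y = int n" "int p dvd (x - h*y)" by auto
    then obtain z where z: "x - h*y = int p * z" by (auto elim: dvdE)
    then have "x = h*y + int p * z" by simp
    then show "xy \<in> g ` {(z,y). qf (a * int p^2) (int p * (b + 2*a*h)) (a*h^2 + b*h + c) z y = int n}"
      using xy id[of z y] by (auto simp: g_def image_iff intro!: exI[of _ z])
  next
    fix xy assume "xy \<in> g ` {(z,y). qf (a * int p^2) (int p * (b + 2*a*h)) (a*h^2 + b*h + c) z y = int n}"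
    then obtain z y where "xy = (h*y + int p * z, y)" "qf (a * int p^2) (int p * (b + 2*a*h)) (a*h^2 + b*h + c) z y = int n"
      by (auto simp: g_def)
    then show "xy \<in> {(x,y). qf a b c x y = int n \<and> int p dvd (x - h*y)}" using id[of z y] by auto
  qed
  then show ?thesis using card_image[OF inj_on_subset[OF inj subset_UNIV]] theta1_nth by metis
qed

lemma yline_nth:
  assumes "p > 0"
  shows "fps_nth (theta a (b * int p) (c * int p^2) 1) n
     = int (card {(x,y). qf a b c x y = int n \<and> int p dvd y})"
proof -
  define g where "g = (\<lambda>(x::int,z::int). (x, int p * z))"
  have id: "qf a (b * int p) (c * int p^2) x z = qf a b c x (int p * z)" for x z
    by (simp add: qf_def power2_eq_square algebra_simps)
  have inj: "inj g" unfolding g_def inj_def using assms by auto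
  have "{(x,y). qf a b c x y = int n \<and> int p dvd y}
      = g ` {(x,z). qf a (b * int p) (c * int p^2) x z = int n}"
  proof (intro equalityI subsetI)
    fix xy assume "xy \<in> {(x,y). qf a b c x y = int n \<and> int p dvd y}"
    then obtain x y where xy: "xy = (x,y)" "qf a b c x y = int n" "int p dvd y" by auto
    then obtain z where z: "y = int p * z" by (auto elim: dvdE)
    then show "xy \<in> g ` {(x,z). qf a (b * int p) (c * int p^2) x z = int n}"
      using xy id[of x z] by (auto simp: g_def image_iff)
  next
    fix xy assume "xy \<in> g ` {(x,z). qf a (b * int p) (c * int p^2) x z = int n}"
    then obtain x z where "xy = (x, int p * z)" "qf a (b * int p) (c * int p^2) x z = int n"
      by (auto simp: g_def)
    then show "xy \<in> {(x,y). qf a b c x y = int n \<and> int p dvd y}" using id[of x z] by auto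
  qed
  then show ?thesis using card_image[OF inj_on_subset[OF inj subset_UNIV]] theta1_nth by metis
qed

lemma orig_nth:
  assumes "p > 0"
  shows "fps_nth (theta a b c (p^2)) n
     = int (card {(x,y). qf a b c x y = int n \<and> int p dvd x \<and> int p dvd y})"
proof (cases "p^2 dvd n")
  case True
  then obtain m where m: "n = p^2 * m" by (auto elim: dvdE)
  have nd: "n div p^2 = m" using m assms by simp
  define g where "g = (\<lambda>(x::int,y::int). (int p * x, int p * y))"
  have id: "qf a b c (int p * x) (int p * y) = int p^2 * qf a b c x y" for x y
    by (simp add: qf_def power2_eq_square algebra_simps)
  have inj: "inj g" unfolding g_def inj_def using assms by auto
  have pn: "int p ^2 \<noteq> 0" using assms by simp
  have eq: "int p^2 * qf a b c x y = int n \<longleftrightarrow> qf a b c x y = int m" for x y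
    using pn m by auto
  have "{(x,y). qf a b c x y = int n \<and> int p dvd x \<and> int p dvd y}
      = g ` {(x,y). qf a b c x y = int m}"
  proof (intro equalityI subsetI)
    fix xy assume "xy \<in> {(x,y). qf a b c x y = int n \<and> int p dvd x \<and> int p dvd y}"
    then obtain x y where xy: "xy = (x,y)" "qf a b c x y = int n" "int p dvd x" "int p dvd y" by auto
    then obtain u v where "x = int p * u" "y = int p * v" by (auto elim!: dvdE)
    then show "xy \<in> g ` {(x,y). qf a b c x y = int m}"
      using xy id[of u v] eq[of u v] by (auto simp: g_def image_iff)
  next
    fix xy assume "xy \<in> g ` {(x,y). qf a b c x y = int m}"
    then obtain u v where "xy = (int p * u, int p * v)" "qf a b c u v = int m"
      by (auto simp: g_def)
    then show "xy \<in> {(x,y). qf a b c x y = int n \<and> int p dvd x \<and> int p dvd y}" using id[of u v] eq[of u v] by auto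
  qed
  then show ?thesis using card_image[OF inj_on_subset[OF inj subset_UNIV]] True nd
    by (simp add: theta_def reps_def qf_def)
next
  case False
  have E: "{(x,y). qf a b c x y = int n \<and> int p dvd x \<and> int p dvd y} = {}"
  proof (rule ccontr)
    assume "\<not> ?thesis"
    then obtain x y where xy: "qf a b c x y = int n" "int p dvd x" "int p dvd y" by auto
    then obtain u v where "x = int p * u" "y = int p * v" by (auto elim!: dvdE)
    then have "int n = int p^2 * qf a b c u v" using xy by (simp add: qf_def power2_eq_square algebra_simps)
    then have "int (p^2) dvd int n" by simp
    then show False using False by (simp only: of_nat_dvd_iff)
  qed
  show ?thesis unfolding E using False by (simp add: theta_def)
qed


lemma abs_le_sq_int: "\<bar>y::int\<bar> \<le> y^2"
proof (cases "y = 0")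
  case False
  then have "1 \<le> \<bar>y\<bar>" by simp
  then have "\<bar>y\<bar> * 1 \<le> \<bar>y\<bar> * \<bar>y\<bar>" by (intro mult_left_mono) auto
  then show ?thesis by (simp add: power2_eq_square abs_mult[symmetric])
qed simp

lemma qf_finite:
  assumes "a > 0" "b^2 - 4*a*c < 0"
  shows "finite {(x,y). qf a b c x y = m}"
proof -
  define N where "N = 4*a*m"
  define M where "M = N + \<bar>b\<bar> * N"
  have bnd: "\<bar>x\<bar> \<le> M \<and> \<bar>y\<bar> \<le> M" if q: "qf a b c x y = m" for x y
  proof -
    have id: "4*a*qf a b c x y = (2*a*x+b*y)^2 + (-(b^2-4*a*c)) * y^2"
      by (simp add: qf_def power2_eq_square algebra_simps)
    have id2: "N = (2*a*x+b*y)^2 + (-(b^2-4*a*c)) * y^2" using id q N_def by simp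
    have d: "-(b^2-4*a*c) \<ge> 1" using assms by simp
    have s1: "(2*a*x+b*y)^2 \<ge> 0" "y^2 \<ge> 0" by auto
    have "1 * y^2 \<le> (-(b^2-4*a*c)) * y^2" by (rule mult_right_mono[OF d]) simp
    then have yN: "y^2 \<le> N" using id2 s1 by linarith
    have uN: "(2*a*x+b*y)^2 \<le> N" using id2 s1 d
      by (smt (verit) mult_nonneg_nonneg)
    have N0: "N \<ge> 0" using yN s1 by linarith
    have ay: "\<bar>y\<bar> \<le> N" using abs_le_sq_int[of y] yN by linarith
    have au: "\<bar>2*a*x+b*y\<bar> \<le> N" using abs_le_sq_int[of "2*a*x+b*y"] uN by linarith
    have "\<bar>b*y\<bar> \<le> \<bar>b\<bar> * N" using ay by (simp add: abs_mult mult_left_mono)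
    moreover have "\<bar>x\<bar> \<le> \<bar>2*a*x\<bar>" proof -
      have "1 * \<bar>x\<bar> \<le> (2*a) * \<bar>x\<bar>" using assms(1) by (intro mult_right_mono) auto
      then show ?thesis using assms(1) by (simp add: abs_mult)
    qed
    ultimately have ax: "\<bar>x\<bar> \<le> M" using au M_def by linarith
    have "\<bar>y\<bar> \<le> M" using ay M_def N0 by (smt (verit) mult_nonneg_nonneg abs_ge_zero)
    then show ?thesis using ax by auto
  qed
  have "{(x,y). qf a b c x y = m} \<subseteq> {-M..M} \<times> {-M..M}"
  proof (rule subsetI)
    fix z assume "z \<in> {(x,y). qf a b c x y = m}"
    then obtain x y where "z = (x,y)" "qf a b c x y = m" by auto
    with bnd[of x y] show "z \<in> {-M..M} \<times> {-M..M}" by (auto simp: abs_le_iff)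
  qed
  then show ?thesis by (rule finite_subset) auto
qed


lemma dvd4a:
  fixes P :: int
  assumes "prime P" "\<not> P dvd 2" "\<not> P dvd a"
  shows "P dvd 4*a*t \<longleftrightarrow> P dvd t"
proof -
  have "4*a*t = 2*(2*(a*t))" by simp
  then show ?thesis using assms by (simp only: prime_dvd_mult_iff) simp
qed

lemma not_dvd4:
  fixes P :: int
  assumes "prime P" "\<not> P dvd 2"
  shows "\<not> P dvd 4"
  using assms prime_dvd_mult_iff[of P 2 2] by simp

lemma dvd_diff_iff: "(P::int) dvd u - v \<Longrightarrow> P dvd u \<longleftrightarrow> P dvd v"
  using dvd_add_right_iff[of P "u-v" v] by simp

lemma NT1:
  fixes P :: int
  assumes "prime P" "P dvd a" "P dvd b^2 - 4*a*c" "\<not> (P dvd a \<and> P dvd b \<and> P dvd c)"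
  shows "P dvd qf a b c x y \<longleftrightarrow> P dvd y"
proof -
  have "b^2 = (b^2 - 4*a*c) + 4*a*c" by simp
  have "P dvd (b^2 - 4*a*c) + 4*a*c" by (rule dvd_add[OF assms(3) dvd_mult2[OF dvd_mult[OF assms(2)]]])
  then have "P dvd b^2" by simp
  then have pb: "P dvd b" using prime_dvd_power_iff[OF assms(1), of 2] by simp
  have e: "qf a b c x y - c*y^2 = a*x^2 + b*x*y" by (simp add: qf_def)
  have "P dvd a*x^2 + b*x*y" using assms(2) pb by (intro dvd_add dvd_mult2) auto
  then have "P dvd qf a b c x y - c*y^2" unfolding e .
  have nc: "\<not> P dvd c" using assms(2,4) pb by blast
  from \<open>P dvd qf a b c x y - c*y^2\<close> have "P dvd qf a b c x y \<longleftrightarrow> P dvd c*y^2" by (rule dvd_diff_iff)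
  also have "\<dots> \<longleftrightarrow> P dvd y" using assms(1) nc by (simp add: prime_dvd_mult_iff prime_dvd_power_iff)
  finally show ?thesis .
qed

lemma NT2_odd:
  fixes P :: int
  assumes "prime P" "\<not> P dvd 2" "\<not> P dvd a" "P dvd b^2 - 4*a*c" "P dvd 2*a*h - - b"
  shows "P dvd qf a b c x y \<longleftrightarrow> P dvd x - h*y"
proof -
  have id: "4*a*qf a b c x y - (2*a*(x-h*y))^2 = (2*a*h - - b)*y*(4*a*x + b*y - 2*a*h*y) - (b^2-4*a*c)*y^2"
    by (simp add: qf_def power2_eq_square algebra_simps)
  have "P dvd 4*a*qf a b c x y - (2*a*(x-h*y))^2" unfolding id
    by (rule dvd_diff[OF dvd_mult2[OF dvd_mult2[OF assms(5)]] dvd_mult2[OF assms(4)]])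
  then have "P dvd 4*a*qf a b c x y \<longleftrightarrow> P dvd (2*a*(x-h*y))^2" by (rule dvd_diff_iff)
  then show ?thesis using assms(1,2,3) dvd4a[OF assms(1,2,3)]
    by (simp add: prime_dvd_mult_iff prime_dvd_power_iff)
qed

lemma NT2_even:
  assumes "even b" "odd a" "even (h - c)"
  shows "even (qf a b c x y) \<longleftrightarrow> even (x - h*y)"
  unfolding qf_def using assms by simp

lemma NT3_odd:
  fixes P :: int
  assumes "prime P" "\<not> P dvd 2" "\<not> P dvd b^2 - 4*a*c" "\<not> QuadRes P (b^2 - 4*a*c)"
  shows "P dvd qf a b c x y \<longleftrightarrow> P dvd x \<and> P dvd y"
proof
  define D where "D = b^2 - 4*a*c"
  have na: "\<not> P dvd a"
  proof
    assume "P dvd a"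
    then have "P dvd b^2 - D" unfolding D_def by simp
    then have "[b^2 = D] (mod P)" by (simp add: cong_iff_dvd_diff)
    then show False using assms(4) unfolding QuadRes_def D_def by blast
  qed
  have id: "4*a*qf a b c x y = (2*a*x+b*y)^2 - D*y^2"
    unfolding D_def by (simp add: qf_def power2_eq_square algebra_simps)
  assume "P dvd qf a b c x y"
  then have "P dvd 4*a*qf a b c x y" by simp
  then have d: "P dvd (2*a*x+b*y)^2 - D*y^2" using id by simp
  have py: "P dvd y"
  proof (rule ccontr)
    assume ny: "\<not> P dvd y"
    then have "coprime y P" using prime_imp_coprime[OF assms(1) ny] by (simp add: coprime_commute)
    then obtain y' where y': "[y*y' = 1] (mod P)" using cong_solve_coprime_int by blast
    have c1: "[(2*a*x+b*y)^2 = D*y^2] (mod P)" using d by (simp add: cong_iff_dvd_diff)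
    have "[(2*a*x+b*y)^2 * y'^2 = D*y^2*y'^2] (mod P)" using c1 by (rule cong_mult) simp
    moreover have "D*y^2*y'^2 = D * (y*y')^2" by (simp add: power_mult_distrib)
    moreover have "[D * (y*y')^2 = D * 1^2] (mod P)" using y' by (intro cong_mult cong_pow) auto
    ultimately have "[((2*a*x+b*y)*y')^2 = D] (mod P)"
      by (metis cong_trans mult_1_right one_power2 power_mult_distrib)
    then show False using assms(4) unfolding QuadRes_def D_def by blast
  qed
  then have "P dvd D*y^2" by (simp add: power2_eq_square)
  then have "P dvd (2*a*x+b*y)^2" using dvd_diff_iff[OF d] by simp
  then have "P dvd 2*a*x+b*y" using prime_dvd_power_iff[OF assms(1), of 2] by simp
  then have "P dvd (2*a*x+b*y) - b*y" using py by (intro dvd_diff) auto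
  then have "P dvd 2*a*x" by simp
  then have "P dvd x" using assms(1,2) na by (simp add: prime_dvd_mult_iff)
  then show "P dvd x \<and> P dvd y" using py by simp
next
  assume "P dvd x \<and> P dvd y"
  then show "P dvd qf a b c x y" by (auto simp: qf_def power2_eq_square)
qed

lemma NT3_even:
  assumes "odd b" "odd (a*c)"
  shows "even (qf a b c x y) \<longleftrightarrow> even x \<and> even y"
  unfolding qf_def using assms by (cases "even x"; cases "even y"; simp)

lemma NT4_odd:
  fixes P :: int
  assumes "prime P" "P dvd a" "\<not> P dvd b^2 - 4*a*c" "P dvd b*h - - c"
  shows "P dvd qf a b c x y \<longleftrightarrow> P dvd y \<or> P dvd x - h*y"
proof -
  have nb: "\<not> P dvd b"
  proof
    assume "P dvd b" then have "P dvd b^2 - 4*a*c" using assms(2) by (simp add: power2_eq_square)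
    then show False using assms(3) by simp
  qed
  have id: "qf a b c x y - b*y*(x-h*y) = a*x^2 + (b*h - - c)*y^2"
    by (simp add: qf_def power2_eq_square algebra_simps)
  have "P dvd qf a b c x y - b*y*(x-h*y)" unfolding id using assms(2,4) by simp
  then have "P dvd qf a b c x y \<longleftrightarrow> P dvd b*y*(x-h*y)" by (rule dvd_diff_iff)
  then show ?thesis using assms(1) nb by (simp add: prime_dvd_mult_iff)
qed

lemma NT4_even:
  assumes "even a" "odd b" "even (h - c)"
  shows "even (qf a b c x y) \<longleftrightarrow> even y \<or> even (x - h*y)"
  unfolding qf_def using assms by (cases "even x"; cases "even y"; simp)

lemma NT5_odd:
  fixes P :: int
  assumes "prime P" "\<not> P dvd 2" "\<not> P dvd a" "\<not> P dvd b^2 - 4*a*c" "P dvd s^2 - (b^2 - 4*a*c)"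
    "P dvd 2*a*h3 - (-b + s)" "P dvd 2*a*h4 - (-b - s)"
  shows "P dvd qf a b c x y \<longleftrightarrow> P dvd x - h3*y \<or> P dvd x - h4*y"
    and "P dvd x - h3*y \<and> P dvd x - h4*y \<longleftrightarrow> P dvd x \<and> P dvd y"
proof -
  define u where "u = 2*a*h3 - (-b + s)"
  define v where "v = 2*a*h4 - (-b - s)"
  define D where "D = b^2 - 4*a*c"
  have id: "4*a*qf a b c x y - (2*a*(x-h3*y))*(2*a*(x-h4*y))
     = (s^2 - D)*y^2 + v*y*(2*a*x+b*y - s*y) + u*y*(2*a*x+b*y + s*y) - u*v*y^2"
    unfolding u_def v_def D_def by (simp add: qf_def power2_eq_square algebra_simps)
  have d1: "P dvd (s^2 - D)*y^2" using assms(5) unfolding D_def by (rule dvd_mult2)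
  have d2: "P dvd v*y*(2*a*x+b*y - s*y)" using assms(7) unfolding v_def by (intro dvd_mult2)
  have d3: "P dvd u*y*(2*a*x+b*y + s*y)" using assms(6) unfolding u_def by (intro dvd_mult2)
  have d4: "P dvd u*v*y^2" using assms(6) unfolding u_def by (intro dvd_mult2)
  have "P dvd 4*a*qf a b c x y - (2*a*(x-h3*y))*(2*a*(x-h4*y))" unfolding id
    by (rule dvd_diff[OF dvd_add[OF dvd_add[OF d1 d2] d3] d4])
  then have "P dvd 4*a*qf a b c x y \<longleftrightarrow> P dvd (2*a*(x-h3*y))*(2*a*(x-h4*y))" by (rule dvd_diff_iff)
  then show "P dvd qf a b c x y \<longleftrightarrow> P dvd x - h3*y \<or> P dvd x - h4*y"
    using assms(1,2,3) dvd4a[OF assms(1,2,3)] not_dvd4[OF assms(1,2)] by (simp add: prime_dvd_mult_iff)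
  have nh: "\<not> P dvd h4 - h3"
  proof
    assume h: "P dvd h4 - h3"
    have "2*s = v - u - 2*a*(h4 - h3)" unfolding u_def v_def by (simp add: algebra_simps)
    moreover have "P dvd v - u - 2*a*(h4 - h3)" unfolding u_def v_def
      by (rule dvd_diff[OF dvd_diff[OF assms(7) assms(6)] dvd_mult[OF h]])
    ultimately have "P dvd 2*s" by simp
    then have "P dvd s" using assms(1,2) by (simp add: prime_dvd_mult_iff)
    then have "P dvd s^2" by (simp add: power2_eq_square)
    then have "P dvd b^2 - 4*a*c" using dvd_diff_iff[OF assms(5)] by simp
    then show False using assms(4) by simp
  qed
  show "P dvd x - h3*y \<and> P dvd x - h4*y \<longleftrightarrow> P dvd x \<and> P dvd y"
  proof
    assume a: "P dvd x - h3*y \<and> P dvd x - h4*y"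
    have "(h4 - h3)*y = (x - h3*y) - (x - h4*y)" by (simp add: algebra_simps)
    moreover have "P dvd (x - h3*y) - (x - h4*y)" using dvd_diff[of P "x - h3*y" "x - h4*y"] a by blast
    ultimately have "P dvd (h4 - h3)*y" by simp
    then have py: "P dvd y" using assms(1) nh by (simp add: prime_dvd_mult_iff)
    then have "P dvd h3*y" by simp
    then have "P dvd (x - h3*y) + h3*y" using a by (intro dvd_add) auto
    then have "P dvd x" by simp
    then show "P dvd x \<and> P dvd y" using py by simp
  next
    assume "P dvd x \<and> P dvd y" then show "P dvd x - h3*y \<and> P dvd x - h4*y" by simp
  qed
qed

lemma NT5_even:
  assumes "odd a" "odd b" "even c" "even (h3 - c)" "odd (h4 - h3)"
  shows "even (qf a b c x y) \<longleftrightarrow> even (x - h3*y) \<or> even (x - h4*y)"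
    and "even (x - h3*y) \<and> even (x - h4*y) \<longleftrightarrow> even x \<and> even y"
  unfolding qf_def using assms by (cases "even x"; cases "even y"; cases "even h3"; simp)+

lemma D8:
  fixes a b c :: int
  assumes "odd b"
  shows "(b^2 - 4*a*c) mod 8 = (if even (a*c) then 1 else 5)"
proof -
  obtain k where k: "b = 2*k+1" using assms oddE by blast
  have "even (k*(k+1))" by simp
  then obtain j where j: "k*(k+1) = 2*j" using evenE by blast
  have b2: "b^2 = 8*j + 1" using k j by (simp add: power2_eq_square algebra_simps)
  show ?thesis
  proof (cases "even (a*c)")
    case True
    then obtain m where "a*c = 2*m" by (auto elim: evenE)
    then have e: "b^2 - 4*a*c = 8*j + 1 - 8*m" using b2 by (simp add: algebra_simps)
    show ?thesis unfolding e using True by presburger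
  next
    case False
    then obtain m where "a*c = 2*m+1" using oddE by blast
    then have e: "b^2 - 4*a*c = 8*j + 1 - 8*m - 4" using b2 by (simp add: algebra_simps)
    show ?thesis unfolding e using False by presburger
  qed
qed


lemma kron2_eq:
  fixes a b c :: int
  shows "kronecker_prime (b^2 - 4*a*c) 2 = (if even b then 0 else if even (a*c) then 1 else -1)"
proof (cases "even b")
  case True then show ?thesis by (simp add: kronecker_prime_def)
next
  case False
  then show ?thesis using D8[OF False, of a c] by (simp add: kronecker_prime_def)
qed

lemma kron_odd: "p \<noteq> 2 \<Longrightarrow> kronecker_prime D p = Legendre D (int p)"
  by (simp add: kronecker_prime_def)

lemma Leg0: "Legendre D P = 0 \<Longrightarrow> P dvd D"
  by (simp add: Legendre_def cong_0_iff split: if_splits)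

lemma Leg1: "Legendre D P = 1 \<Longrightarrow> \<not> P dvd D"
  by (simp add: Legendre_def cong_0_iff split: if_splits)

lemma Legm1: "Legendre D P = -1 \<Longrightarrow> \<not> P dvd D \<and> \<not> QuadRes P D"
  by (simp add: Legendre_def cong_0_iff split: if_splits)

lemma ndvd2: assumes "prime p" "p \<noteq> 2" shows "\<not> int p dvd 2"
proof
  assume "int p dvd 2"
  then have "p dvd 2" by (metis of_nat_dvd_iff of_nat_numeral)
  then show False using assms primes_dvd_imp_eq[of p 2] by simp
qed

lemma card_ie:
  assumes "finite A" "finite B"
  shows "int (card (A \<union> B)) = int (card A) + int (card B) - int (card (A \<inter> B))"
  using card_Un_Int[OF assms] by simp

theorem lemma4p2:
  fixes p :: nat and a b c :: int
  assumes "prime p" and "a > 0" and "b^2 - 4*a*c < 0" and "gcd (gcd a b) c = 1"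
  defines "D \<equiv> b^2 - 4*a*c"
    and "f \<equiv> (\<lambda>h::int. theta (a * int p^2) (int p * (b + 2*a*h)) (a*h^2 + b*h + c) 1)"
  shows
   "(int p dvd a \<and> kronecker_prime D p = 0 \<longrightarrow>
       proj p 0 (theta a b c 1) = theta a (b * int p) (c * int p^2) 1)
  \<and> (\<not> int p dvd a \<and> kronecker_prime D p = 0 \<longrightarrow>
       (\<forall>h1. 0 \<le> h1 \<and> h1 < int p \<and>
          (if p = 2 then [h1 = c] (mod 2) else [2*a*h1 = -b] (mod int p)) \<longrightarrow>
          proj p 0 (theta a b c 1) = f h1))
  \<and> (kronecker_prime D p = -1 \<longrightarrow>
       proj p 0 (theta a b c 1) = theta a b c (p^2))
  \<and> (int p dvd a \<and> kronecker_prime D p = 1 \<longrightarrow>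
       (\<forall>h2. 0 \<le> h2 \<and> h2 < int p \<and>
          (if p = 2 then [h2 = c] (mod 2) else [b*h2 = -c] (mod int p)) \<longrightarrow>
          proj p 0 (theta a b c 1) =
            f h2 + theta a (int p * b) (c * int p^2) 1 - theta a b c (p^2)))
  \<and> (\<not> int p dvd a \<and> kronecker_prime D p = 1 \<longrightarrow>
       (\<forall>s h3 h4. [s^2 = D] (mod int p) \<and> 0 \<le> h3 \<and> h3 < int p \<and> 0 \<le> h4 \<and> h4 < int p \<and>
          (if p = 2 then [h3 = c] (mod 2) \<and> \<not> [h4 = h3] (mod 2)
           else [2*a*h3 = -b + s] (mod int p) \<and> [2*a*h4 = -b - s] (mod int p)) \<longrightarrow>
          proj p 0 (theta a b c 1) = f h3 + f h4 - theta a b c (p^2)))"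
proof -
  have pr: "prime (int p)" using assms(1) by simp
  have p0: "p > 0" using assms(1) prime_gt_0_nat by blast
  have fin: "finite {(x,y). qf a b c x y = m}" for m using qf_finite[OF assms(2,3)] .
  have gcdP: "\<not> (int p dvd a \<and> int p dvd b \<and> int p dvd c)"
  proof
    assume "int p dvd a \<and> int p dvd b \<and> int p dvd c"
    then have "int p dvd gcd (gcd a b) c" by simp
    then have "int p dvd 1" using assms(4) by simp
    then have "p dvd 1" by (metis of_nat_1 of_nat_dvd_iff)
    then show False using assms(1) by simp
  qed
  have k2: "p = 2 \<Longrightarrow> kronecker_prime D p = (if even b then 0 else if even (a*c) then 1 else -1)"
    unfolding D_def using kron2_eq by simp
  have ko: "p \<noteq> 2 \<Longrightarrow> kronecker_prime D p = Legendre D (int p)" by (rule kron_odd)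
  have c1: "proj p 0 (theta a b c 1) = theta a (b * int p) (c * int p^2) 1"
    if pa: "int p dvd a" and k: "kronecker_prime D p = 0"
  proof -
    have pD: "int p dvd b^2 - 4*a*c"
    proof (cases "p = 2")
      case True
      then have "even b" using k k2 by (simp split: if_splits)
      then have "even (b^2 - 4*a*c)" by simp
      then show ?thesis using True by simp
    next
      case False then show ?thesis using k ko Leg0 D_def by metis
    qed
    have key: "int p dvd qf a b c x y \<longleftrightarrow> int p dvd y" for x y
      by (rule NT1[OF pr pa pD gcdP])
    show ?thesis
      by (rule fps_ext) (simp only: proj0_nth[OF p0] yline_nth[OF p0] key)
  qed
  have c2: "proj p 0 (theta a b c 1) = f h1"
    if na: "\<not> int p dvd a" and k: "kronecker_prime D p = 0"
      and hc: "if p = 2 then [h1 = c] (mod 2) else [2*a*h1 = -b] (mod int p)" for h1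
  proof -
    have key: "int p dvd qf a b c x y \<longleftrightarrow> int p dvd x - h1*y" for x y
    proof (cases "p = 2")
      case True
      then have "even b" using k k2 by (simp split: if_splits)
      moreover have "odd a" using na True by simp
      moreover have "even (h1 - c)" using hc True by (simp add: cong_iff_dvd_diff)
      ultimately show ?thesis using NT2_even True by simp
    next
      case False
      have pD: "int p dvd b^2 - 4*a*c" using False k ko Leg0 D_def by metis
      have "int p dvd 2*a*h1 - - b" using hc False by (simp add: cong_iff_dvd_diff)
      then show ?thesis using NT2_odd[OF pr ndvd2[OF assms(1) False] na pD] by blast
    qed
    show ?thesis unfolding f_def
      by (rule fps_ext) (simp only: proj0_nth[OF p0] line_nth[OF p0] key)
  qed
  have c3: "proj p 0 (theta a b c 1) = theta a b c (p^2)"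
    if k: "kronecker_prime D p = -1"
  proof -
    have key: "int p dvd qf a b c x y \<longleftrightarrow> int p dvd x \<and> int p dvd y" for x y
    proof (cases "p = 2")
      case True
      then have "odd b" "odd (a*c)" using k k2 by (simp_all split: if_splits)
      then show ?thesis using NT3_even True by simp
    next
      case False
      have "\<not> int p dvd b^2 - 4*a*c \<and> \<not> QuadRes (int p) (b^2 - 4*a*c)"
        using False k ko Legm1 D_def by metis
      then show ?thesis using NT3_odd[OF pr ndvd2[OF assms(1) False]] by blast
    qed
    show ?thesis
      by (rule fps_ext) (simp only: proj0_nth[OF p0] orig_nth[OF p0] key)
  qed
  have c4: "proj p 0 (theta a b c 1) = f h2 + theta a (int p * b) (c * int p^2) 1 - theta a b c (p^2)"
    if pa: "int p dvd a" and k: "kronecker_prime D p = 1"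
      and hc: "if p = 2 then [h2 = c] (mod 2) else [b*h2 = -c] (mod int p)" for h2
  proof -
    have key: "int p dvd qf a b c x y \<longleftrightarrow> int p dvd y \<or> int p dvd x - h2*y" for x y
    proof (cases "p = 2")
      case True
      then have "odd b" using k k2 by (simp split: if_splits)
      moreover have "even a" using pa True by simp
      moreover have "even (h2 - c)" using hc True by (simp add: cong_iff_dvd_diff)
      ultimately show ?thesis using NT4_even True by simp
    next
      case False
      have pD: "\<not> int p dvd b^2 - 4*a*c" using False k ko Leg1 D_def by metis
      have "int p dvd b*h2 - - c" using hc False by (simp add: cong_iff_dvd_diff)
      then show ?thesis using NT4_odd[OF pr pa pD] by blast
    qed
    have pb: "int p * b = b * int p" by simp
    show ?thesis
    proof (rule fps_ext)
      fix n
      define A where "A = {(x,y). qf a b c x y = int n \<and> int p dvd y}"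
      define B where "B = {(x,y). qf a b c x y = int n \<and> int p dvd x - h2*y}"
      have fA: "finite A" unfolding A_def by (rule finite_subset[OF _ fin[of "int n"]]) auto
      have fB: "finite B" unfolding B_def by (rule finite_subset[OF _ fin[of "int n"]]) auto
      have U: "A \<union> B = {(x,y). qf a b c x y = int n \<and> int p dvd qf a b c x y}"
        unfolding A_def B_def using key by auto
      have I: "A \<inter> B = {(x,y). qf a b c x y = int n \<and> int p dvd x \<and> int p dvd y}"
      proof -
        have "int p dvd y \<and> int p dvd x - h2*y \<longleftrightarrow> int p dvd x \<and> int p dvd y" for x y
        proof
          assume h: "int p dvd y \<and> int p dvd x - h2*y"
          then have "int p dvd (x - h2*y) + h2*y" by (intro dvd_add) auto
          then show "int p dvd x \<and> int p dvd y" using h by simp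
        qed auto
        then show ?thesis unfolding A_def B_def by auto
      qed
      have "fps_nth (proj p 0 (theta a b c 1)) n = int (card (A \<union> B))"
        unfolding U by (rule proj0_nth[OF p0])
      also have "\<dots> = int (card A) + int (card B) - int (card (A \<inter> B))" by (rule card_ie[OF fA fB])
      also have "\<dots> = fps_nth (f h2 + theta a (int p * b) (c * int p^2) 1 - theta a b c (p^2)) n"
        unfolding I unfolding A_def B_def f_def pb by (simp only: fps_add_nth fps_sub_nth line_nth[OF p0] yline_nth[OF p0] orig_nth[OF p0])
      finally show "fps_nth (proj p 0 (theta a b c 1)) n = fps_nth (f h2 + theta a (int p * b) (c * int p^2) 1 - theta a b c (p^2)) n" .
    qed
  qed
  have c5: "proj p 0 (theta a b c 1) = f h3 + f h4 - theta a b c (p^2)"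
    if na: "\<not> int p dvd a" and k: "kronecker_prime D p = 1" and sD: "[s^2 = D] (mod int p)"
      and hc: "if p = 2 then [h3 = c] (mod 2) \<and> \<not> [h4 = h3] (mod 2)
           else [2*a*h3 = -b + s] (mod int p) \<and> [2*a*h4 = -b - s] (mod int p)" for s h3 h4
  proof -
    have key: "(int p dvd qf a b c x y \<longleftrightarrow> int p dvd x - h3*y \<or> int p dvd x - h4*y)
       \<and> (int p dvd x - h3*y \<and> int p dvd x - h4*y \<longleftrightarrow> int p dvd x \<and> int p dvd y)" for x y
    proof (cases "p = 2")
      case True
      then have "odd b" "even (a*c)" using k k2 by (simp_all split: if_splits)
      moreover have "odd a" using na True by simp
      ultimately have "even c" by simp
      moreover have "even (h3 - c)" "odd (h4 - h3)" using hc True by (simp_all add: cong_iff_dvd_diff)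
      ultimately show ?thesis using NT5_even[of a b c h3 h4 x y] \<open>odd a\<close> \<open>odd b\<close> True by simp
    next
      case False
      have pD: "\<not> int p dvd b^2 - 4*a*c" using False k ko Leg1 D_def by metis
      have s2: "int p dvd s^2 - (b^2 - 4*a*c)" using sD D_def by (simp add: cong_iff_dvd_diff)
      have "int p dvd 2*a*h3 - (-b + s)" "int p dvd 2*a*h4 - (-b - s)"
        using hc False by (simp_all add: cong_iff_dvd_diff)
      then show ?thesis using NT5_odd[OF pr ndvd2[OF assms(1) False] na pD s2] by blast
    qed
    show ?thesis
    proof (rule fps_ext)
      fix n
      define A where "A = {(x,y). qf a b c x y = int n \<and> int p dvd x - h3*y}"
      define B where "B = {(x,y). qf a b c x y = int n \<and> int p dvd x - h4*y}"
      have fA: "finite A" unfolding A_def by (rule finite_subset[OF _ fin[of "int n"]]) auto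
      have fB: "finite B" unfolding B_def by (rule finite_subset[OF _ fin[of "int n"]]) auto
      have U: "A \<union> B = {(x,y). qf a b c x y = int n \<and> int p dvd qf a b c x y}"
        unfolding A_def B_def using key by auto
      have I: "A \<inter> B = {(x,y). qf a b c x y = int n \<and> int p dvd x \<and> int p dvd y}"
        unfolding A_def B_def using key by auto
      have "fps_nth (proj p 0 (theta a b c 1)) n = int (card (A \<union> B))"
        unfolding U by (rule proj0_nth[OF p0])
      also have "\<dots> = int (card A) + int (card B) - int (card (A \<inter> B))" by (rule card_ie[OF fA fB])
      also have "\<dots> = fps_nth (f h3 + f h4 - theta a b c (p^2)) n"
        unfolding I unfolding A_def B_def f_def by (simp only: fps_add_nth fps_sub_nth line_nth[OF p0] orig_nth[OF p0])
      finally show "fps_nth (proj p 0 (theta a b c 1)) n = fps_nth (f h3 + f h4 - theta a b c (p^2)) n" .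
    qed
  qed
  show ?thesis using c1 c2 c3 c4 c5 by blast
qed

end
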